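(* Let $q$ be a fixed prime power and $0<k<n$. Given an integer $i$ with $0\le i<\left[\begin{smallmatrix} n\\ k\end{smallmatrix}\right]_q$, Encoding Algorithm C (which produces the subspace $X\in\mathcal{G}_q(n,k)$ with $\mathrm{Ind}_{\mathcal{F}}(X)=i$) can be carried out with $O(k^{5/2}(n-k)^{5/2})$ operations on $q$-ary digits.
   Context: $\mathcal{G}_q(n,k)$ is the set of $k$-dimensional subspaces of $\mathbb{F}_q^n$ (field elements identified with $\mathbb{Z}_q$); $\left[\begin{smallmatrix} n\\ k\end{smallmatrix}\right]_q=\prod_{i=0}^{k-1}\frac{q^{n-i}-1}{q^{k-i}-1}$. A subspace $X$ is described by its Ferrers tableaux form $\mathcal{F}(X)$: from the unique $k\times n$ reduced row echelon matrix whose rows span $X$, delete in each row the leading one and everything to its left, and delete the columns containing leading ones, right-justifying the remaining entries. Its Ferrers diagram $\mathcal{F}_X$ (dots in place of entries) is represented as $(\mathcal{F}_{n-k},\dots,\mathcal{F}_1)$, $\mathcal{F}_i$ = number of dots in the $i$-th column from the right, $0\le\mathcal{F}_{i+1}\le\mathcal{F}_i\le k$; $|\mathcal{F}_X|$ is the number of dots. The entries vector $x$ lists entries of $\mathcal{F}(X)$ right to left, top to bottom, $\{x\}=\sum_t x_tq^{|\mathcal{F}_X|-t}$. $p(a,\eta,s)$ is the number of partitions of $s$ fitting in an $a\times\eta$ box; $\alpha_s=p(k,n-k,s)$. Among diagrams of size $m$, $\mathcal{F}<\widetilde{\mathcal{F}}$ if $\mathcal{F}_i>\widetilde{\mathcal{F}}_i$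 at the least $i$ where they differ; $\mathrm{ind}_m(\mathcal{F})$ is the number of size-$m$ diagrams in a $k\times(n-k)$ box preceding $\mathcal{F}$, and $\mathrm{ind}_m^{-1}$ is its inverse, computed by Algorithm B: with $N_m(\mathcal{F}_j,\dots,\mathcal{F}_1)=p(\mathcal{F}_j,n-k-j,m-\sum_{t\le j}\mathcal{F}_t)$ and $\mathcal{F}_0=k$, $h=$ given index, for $j=1,\dots,n-k$: if $\sum_{t<j}\mathcal{F}_t=m$ set $\mathcal{F}_j=0$; otherwise set $\ell=0$ and while $h\ge N_m(\mathcal{F}_{j-1}-\ell,\mathcal{F}_{j-1},\dots,\mathcal{F}_1)$ replace $h$ by $h-N_m(\mathcal{F}_{j-1}-\ell,\mathcal{F}_{j-1},\dots,\mathcal{F}_1)$ and $\ell$ by $\ell+1$; then set $\mathcal{F}_j=\mathcal{F}_{j-1}-\ell$. Encoding Algorithm C: set $i_0=i$; for $j=0,\dots,k(n-k)$, with $m=k(n-k)-j$: if $i_j<\alpha_mq^m$, set $|\mathcal{F}_X|=m$, $\mathcal{F}_X=\mathrm{ind}_m^{-1}(\lfloor i_j/q^m\rfloor)$, let $x$ be the base-$q$ representation (length $m$) of $i_j-\lfloor i_j/q^m\rfloor q^m$, and stop; otherwise set $i_{j+1}=i_j-\alpha_mq^m$. Complexity counts operations on $q$-ary digits; multiplication by $q^i$ is a shift. *)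

theory Defs
  imports Complex_Main "HOL-Computational_Algebra.Primes"
begin

definition prime_power :: "nat \<Rightarrow> bool" where
  "prime_power q \<longleftrightarrow> (\<exists>p r. prime p \<and> r > 0 \<and> q = p ^ r)"

definition qbinom :: "nat \<Rightarrow> nat \<Rightarrow> nat \<Rightarrow> real" where
  "qbinom q n k = (\<Prod>i<k. (real q ^ (n - i) - 1) / (real q ^ (k - i) - 1))"

(* p(a,eta,s): partitions of s into at most eta parts, each part at most a
   (i.e. fitting in a box); partitions padded with zeros to length eta.
   Negative s gives 0. *)
definition pcount :: "nat \<Rightarrow> nat \<Rightarrow> int \<Rightarrow> nat" where
  "pcount a eta s = (if s < 0 then 0 else
     card {xs :: nat list. length xs = eta \<and> sorted xs \<and> (\<forall>x\<in>set xs. x \<le> a)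
                           \<and> sum_list xs = nat s})"

(* cost model: number of q-ary digits of a number; an operation (add, subtract,
   compare, read) on numbers costs the number of q-ary digits involved *)
definition dlen :: "nat \<Rightarrow> nat \<Rightarrow> nat" where
  "dlen q x = max 1 (LEAST d. x < q ^ d)"

definition cop :: "nat \<Rightarrow> nat \<Rightarrow> nat \<Rightarrow> nat" where
  "cop q x y = max (dlen q x) (dlen q y)"

(* Algorithm B, inner while-loop over l (bounded by prev+1 iterations);
   returns (l, h, cost) *)
fun algB_inner :: "nat \<Rightarrow> nat \<Rightarrow> nat \<Rightarrow> nat \<Rightarrow> nat \<Rightarrow> nat \<Rightarrow> nat \<Rightarrow> nat \<Rightarrow> nat \<Rightarrow> nat
                   \<Rightarrow> nat \<times> nat \<times> nat" where
  "algB_inner q n k m j S prev h l 0 = (l, h, 0)"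
| "algB_inner q n k m j S prev h l (Suc f) =
    (let a = prev - l;
         N = pcount a (n - k - j) (int m - int (S + a));
         c0 = cop q l prev + cop q S a + cop q (S + a) m + dlen q N + cop q h N
     in if N \<le> h then
          (case algB_inner q n k m j S prev (h - N) (Suc l) f of
             (l', h', c) \<Rightarrow> (l', h', c0 + cop q h N + cop q l 1 + c))
        else (l, h, c0))"

(* Algorithm B, outer loop over j = 1..n-k; S = sum of F_t for t<j, prev = F_{j-1};
   returns (F_1..F_{n-k}, cost) *)
fun algB_outer :: "nat \<Rightarrow> nat \<Rightarrow> nat \<Rightarrow> nat \<Rightarrow> nat \<Rightarrow> nat \<Rightarrow> nat \<Rightarrow> nat \<Rightarrow> nat \<Rightarrow> nat list
                   \<Rightarrow> nat list \<times> nat" where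
  "algB_outer q n k m j 0 S prev h Fs = (Fs, 0)"
| "algB_outer q n k m j (Suc r) S prev h Fs =
    (let c0 = cop q S m in
     if S = m then
       (case algB_outer q n k m (Suc j) r S 0 h (Fs @ [0]) of
          (Fs', c) \<Rightarrow> (Fs', c0 + cop q j 1 + c))
     else
       (case algB_inner q n k m j S prev h 0 (Suc prev) of
          (l, h', c1) \<Rightarrow>
            (let Fj = prev - l in
             (case algB_outer q n k m (Suc j) r (S + Fj) Fj h' (Fs @ [Fj]) of
                (Fs', c) \<Rightarrow> (Fs', c0 + c1 + cop q prev l + cop q S Fj + cop q j 1 + c)))))"

(* ind_m^{-1}(h) with cost; F_0 = k *)
definition algB :: "nat \<Rightarrow> nat \<Rightarrow> nat \<Rightarrow> nat \<Rightarrow> nat \<Rightarrow> nat list \<times> nat" where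
  "algB q n k m h = algB_outer q n k m 1 (n - k) 0 k h []"

(* Algorithm C main loop (j = 0..k(n-k)); returns (Ferrers diagram, |F_X|,
   entries vector x (most significant digit first), cost) *)
fun algC_loop :: "nat \<Rightarrow> nat \<Rightarrow> nat \<Rightarrow> nat \<Rightarrow> nat \<Rightarrow> nat
                  \<Rightarrow> nat list \<times> nat \<times> nat list \<times> nat" where
  "algC_loop q n k i j 0 = ([], 0, [], 0)"
| "algC_loop q n k i j (Suc f) =
    (let m = k * (n - k) - j;
         A = pcount k (n - k) (int m) * q ^ m;
         c0 = cop q (k * (n - k)) j + dlen q A + cop q i A
     in if i < A then
          (let h = i div q ^ m;
               r = i mod q ^ m;
               x = map (\<lambda>t. r div q ^ (m - 1 - t) mod q) [0..<m];
               (Fs, cB) = algB q n k m h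
           in (Fs, m, x, c0 + dlen q i + dlen q i + m + cB))
        else
          (case algC_loop q n k (i - A) (Suc j) f of
             (Fs, m', x, c) \<Rightarrow> (Fs, m', x, c0 + cop q i A + cop q j 1 + c)))"

(* cost of precomputing the table of p(a,eta,s), a<=k, eta<=n-k, s<=k(n-k),
   via the recurrence p(a,eta,s) = p(a-1,eta,s) + p(a,eta-1,s-a):
   one addition per entry, costing the number of digits of the result *)
definition table_cost :: "nat \<Rightarrow> nat \<Rightarrow> nat \<Rightarrow> nat" where
  "table_cost q n k = (\<Sum>a\<le>k. \<Sum>eta\<le>n - k. \<Sum>s\<le>k * (n - k). dlen q (pcount a eta (int s)))"

definition encode_cost :: "nat \<Rightarrow> nat \<Rightarrow> nat \<Rightarrow> nat \<Rightarrow> nat" where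
  "encode_cost q n k i =
     table_cost q n k + snd (snd (snd (algC_loop q n k i 0 (k * (n - k) + 1))))"

end

theory Submission
  imports Defs
begin


lemma pow_fact_le_exp:
  assumes "0 \<le> (x::real)" shows "x^n / fact n \<le> exp x"
proof -
  have s: "(\<lambda>n. x^n / fact n) sums exp x"
    using exp_converges[of x] by (simp add: divide_inverse mult.commute scaleR_conv_of_real)
  have "sum (\<lambda>n. x^n / fact n) {n} \<le> suminf (\<lambda>n. x^n / fact n)"
    by (rule sum_le_suminf) (use s assms in \<open>auto simp: sums_iff\<close>)
  then show ?thesis using s by (simp add: sums_iff)
qed

lemma binom_exp_aux:
  assumes "1 \<le> s" "s \<le> L"
  shows "real ((L + s) choose s) \<le> exp (3 * sqrt (real s * real L))"
proof -
  have sp: "0 < real s" using assms by simp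
  have "real ((L + s) choose s) * fact s \<le> real (L+s) ^ s"
    using binomial_fact_pow[of "L+s" s] by (metis of_nat_fact of_nat_le_iff of_nat_mult of_nat_power)
  hence "real ((L + s) choose s) \<le> real (L+s) ^ s / fact s"
    by (simp add: field_simps)
  also have "\<dots> = ((real L + real s) / real s) ^ s * (real s ^ s / fact s)"
    using sp by (simp add: power_divide field_simps)
  also have "\<dots> \<le> exp (2 * sqrt (real s * real L)) * exp (real s)"
  proof (rule mult_mono)
    have "(real L + real s) / real s = 1 + real L / real s" using sp by (simp add: field_simps)
    also have "\<dots> \<le> (1 + sqrt (real L / real s))^2"
      by (simp add: power2_eq_square algebra_simps)
    also have "\<dots> \<le> exp (sqrt (real L / real s))^2"
      by (intro power_mono) auto
    also have "\<dots> = exp (2 * sqrt (real L / real s))"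
      by (simp add: power2_eq_square exp_add[symmetric])
    finally have "((real L + real s) / real s) ^ s \<le> exp (2 * sqrt (real L / real s)) ^ s"
      by (intro power_mono) (use sp in auto)
    also have "\<dots> = exp (real s * (2 * sqrt (real L / real s)))"
      by (simp add: exp_of_nat_mult)
    also have "real s * (2 * sqrt (real L / real s)) = 2 * sqrt (real s * real L)"
    proof -
      have "real s = sqrt (real s) * sqrt (real s)" using sp by simp
      then have "real s * sqrt (real L / real s) = sqrt (real s) * (sqrt (real s) * sqrt (real L / real s))"
        by (metis mult.assoc)
      also have "\<dots> = sqrt (real s) * sqrt (real L)"
        using sp by (simp add: real_sqrt_mult[symmetric])
      finally show ?thesis by (simp add: real_sqrt_mult)
    qed
    finally show "((real L + real s) / real s) ^ s \<le> exp (2 * sqrt (real s * real L))" .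
    show "real s ^ s / fact s \<le> exp (real s)" by (rule pow_fact_le_exp) simp
  qed auto
  also have "\<dots> = exp (2 * sqrt (real s * real L) + real s)" by (simp add: exp_add)
  also have "\<dots> \<le> exp (3 * sqrt (real s * real L))"
  proof -
    have "real s = sqrt (real s * real s)" by simp
    also have "\<dots> \<le> sqrt (real s * real L)" using assms by (intro real_sqrt_le_mono mult_left_mono) auto
    finally show ?thesis by simp
  qed
  finally show ?thesis .
qed

lemma binom_exp:
  assumes "1 \<le> K" "1 \<le> E"
  shows "real ((K + E) choose K) \<le> exp (3 * sqrt (real K * real E))"
proof (cases "K \<le> E")
  case True thus ?thesis using binom_exp_aux[of K E] assms by (simp add: add.commute)
next
  case False
  have "(K + E) choose K = (K+E) choose E" using binomial_symmetric[of E "K+E"] by simp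
  thus ?thesis using binom_exp_aux[of E K] assms False by (simp add: mult.commute)
qed



definition SL :: "nat \<Rightarrow> nat \<Rightarrow> nat list set" where
  "SL a eta = {xs. length xs = eta \<and> sorted xs \<and> (\<forall>x\<in>set xs. x \<le> a)}"

lemma SL_finite: "finite (SL a eta)"
proof -
  have "SL a eta \<subseteq> {xs. set xs \<subseteq> {..a} \<and> length xs = eta}" by (auto simp: SL_def)
  moreover have "finite {xs. set xs \<subseteq> {..a} \<and> length xs = eta}"
    by (rule finite_lists_length_eq) simp
  ultimately show ?thesis by (rule finite_subset)
qed

lemma pcount_le_SL: "pcount a eta s \<le> card (SL a eta)"
  using SL_finite[of a eta] unfolding pcount_def SL_def
  by (auto intro!: card_mono)

lemma SL_0: "SL 0 eta = {replicate eta 0}"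
  by (auto simp: SL_def sorted_iff_nth_mono intro!: replicate_eqI)

lemma SL_eta0: "SL a 0 = {[]}"
  by (auto simp: SL_def)

lemma SL_split: "SL (Suc a) (Suc eta) \<subseteq> SL a (Suc eta) \<union> (\<lambda>xs. xs @ [Suc a]) ` SL (Suc a) eta"
proof
  fix xs assume xs: "xs \<in> SL (Suc a) (Suc eta)"
  hence ne: "xs \<noteq> []" and len: "length xs = Suc eta" and so: "sorted xs" and bd: "\<forall>x\<in>set xs. x \<le> Suc a"
    by (auto simp: SL_def)
  have dec: "xs = butlast xs @ [last xs]" using ne by simp
  show "xs \<in> SL a (Suc eta) \<union> (\<lambda>xs. xs @ [Suc a]) ` SL (Suc a) eta"
  proof (cases "last xs \<le> a")
    case True
    have "\<forall>x\<in>set xs. x \<le> last xs"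
      using so dec by (metis sorted_append list.set_intros(1) order_refl set_append Un_iff empty_iff list.set(1) set_ConsD)
    hence "\<forall>x\<in>set xs. x \<le> a" using True by auto
    thus ?thesis using len so by (auto simp: SL_def)
  next
    case False
    hence l: "last xs = Suc a" using bd ne last_in_set by fastforce
    have "butlast xs \<in> SL (Suc a) eta"
      using len so bd dec unfolding SL_def
      by (auto simp: sorted_append in_set_butlastD) (metis sorted_append)
    thus ?thesis using dec l by (metis UnI2 image_eqI)
  qed
qed

lemma card_SL: "card (SL a eta) \<le> (a + eta) choose a"
proof (induction eta arbitrary: a)
  case 0 thus ?case by (simp add: SL_eta0)
next
  case (Suc eta)
  note IHo = Suc.IH
  show ?case
  proof (induction a)
    case 0 thus ?case by (simp add: SL_0)
  next
    case (Suc a)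
    have "card (SL (Suc a) (Suc eta)) \<le> card (SL a (Suc eta) \<union> (\<lambda>xs. xs @ [Suc a]) ` SL (Suc a) eta)"
      by (intro card_mono SL_split) (simp add: SL_finite)
    also have "\<dots> \<le> card (SL a (Suc eta)) + card ((\<lambda>xs. xs @ [Suc a]) ` SL (Suc a) eta)"
      by (rule card_Un_le)
    also have "\<dots> \<le> card (SL a (Suc eta)) + card (SL (Suc a) eta)"
      by (intro add_left_mono card_image_le SL_finite)
    also have "\<dots> \<le> ((a + Suc eta) choose a) + ((Suc a + eta) choose (Suc a))"
      using Suc.IH IHo[of "Suc a"] by (intro add_mono) (simp_all del: binomial_Suc_Suc)
    also have "\<dots> = (Suc a + Suc eta) choose (Suc a)"
      by simp
    finally show ?case .
  qed
qed



lemma dlen_le: "x < q^d \<Longrightarrow> dlen q x \<le> max 1 d"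
  unfolding dlen_def by (intro max.mono order_refl Least_le)

lemma pow_gt_self: "2 \<le> q \<Longrightarrow> x < q ^ x"
proof -
  assume q: "2 \<le> q"
  have "x < 2 ^ x" by (rule less_exp)
  also have "\<dots> \<le> q ^ x" using q by (intro power_mono) auto
  finally show ?thesis .
qed

lemma dlen_lin: "2 \<le> q \<Longrightarrow> dlen q x \<le> x + 1"
  using dlen_le[of x q x] pow_gt_self[of q x] by simp

lemma dlen_mono:
  assumes q: "2 \<le> q" and xy: "x \<le> y" shows "dlen q x \<le> dlen q y"
proof -
  have "y < q ^ (LEAST d. y < q ^ d)" by (rule LeastI[of _ y]) (rule pow_gt_self[OF q])
  hence "x < q ^ (LEAST d. y < q ^ d)" using xy by simp
  hence "dlen q x \<le> max 1 (LEAST d. y < q ^ d)" by (rule dlen_le)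
  thus ?thesis by (simp add: dlen_def)
qed

definition DD :: "nat \<Rightarrow> nat \<Rightarrow> nat" where
  "DD K E = 2 * nat \<lceil>3 * sqrt (real K * real E)\<rceil> + 1"

lemma DD_bound: "real (DD K E) \<le> 6 * sqrt (real K * real E) + 3"
proof -
  have "real (nat \<lceil>3 * sqrt (real K * real E)\<rceil>) = real_of_int \<lceil>3 * sqrt (real K * real E)\<rceil>"
    by simp
  also have "\<dots> \<le> 3 * sqrt (real K * real E) + 1" by linarith
  finally have "real (nat \<lceil>3 * sqrt (real K * real E)\<rceil>) \<le> 3 * sqrt (real K * real E) + 1" .
  thus ?thesis unfolding DD_def by (simp only: of_nat_add of_nat_mult)
qed

lemma pcount_lt:
  assumes q: "2 \<le> q" and K: "1 \<le> K" and E: "1 \<le> E" and a: "a \<le> K" and eta: "eta \<le> E"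
  shows "pcount a eta s < q ^ DD K E"
proof -
  define n where "n = nat \<lceil>3 * sqrt (real K * real E)\<rceil>"
  have "pcount a eta s \<le> (a + eta) choose a"
    using pcount_le_SL card_SL le_trans by blast
  also have "\<dots> \<le> (a + E) choose a" using eta by (intro binomial_right_mono) simp
  also have "\<dots> = (a + E) choose E" using binomial_symmetric[of a "a+E"] by simp
  also have "\<dots> \<le> (K + E) choose E" using a by (intro binomial_right_mono) simp
  also have "\<dots> = (K + E) choose K" using binomial_symmetric[of E "K+E"] by simp
  finally have p1: "pcount a eta s \<le> (K + E) choose K" .
  have "real ((K + E) choose K) \<le> exp (3 * sqrt (real K * real E))" by (rule binom_exp[OF K E])
  also have "\<dots> \<le> exp (real n)" unfolding n_def by simp
  also have "\<dots> = exp 1 ^ n" using exp_of_nat_mult[of n 1] by simp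
  also have "\<dots> \<le> 4 ^ n" using exp_le by (intro power_mono) auto
  finally have "(K + E) choose K \<le> 4 ^ n" by (metis of_nat_le_iff of_nat_numeral of_nat_power)
  also have "(4::nat) ^ n = 2 ^ (2*n)" by (simp add: power_mult)
  also have "\<dots> < 2 ^ (2*n+1)" by simp
  also have "\<dots> \<le> q ^ (2*n+1)" using q by (intro power_mono) auto
  finally show ?thesis using p1 unfolding DD_def n_def by simp
qed



lemma cop_le: "dlen q x \<le> W \<Longrightarrow> dlen q y \<le> W \<Longrightarrow> cop q x y \<le> W"
  by (simp add: cop_def)

lemma inner:
  assumes q: "2 \<le> q"
    and sm: "\<And>x. x \<le> 2*(k*(n-k))+1 \<Longrightarrow> dlen q x \<le> W"
    and pc: "\<And>a eta s. a \<le> k \<Longrightarrow> eta \<le> n-k \<Longrightarrow> dlen q (pcount a eta s) \<le> W"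
    and prev: "prev \<le> k" and S: "S + k \<le> k*(n-k)" and m: "m \<le> k*(n-k)"
  shows "l + f \<le> k+1 \<Longrightarrow> dlen q h \<le> W \<Longrightarrow>
    (case algB_inner q n k m j S prev h l f of (l', h', c) \<Rightarrow> l' \<le> l + f \<and> h' \<le> h \<and> c \<le> 7*W*f)"
proof (induction f arbitrary: h l)
  case 0 thus ?case by simp
next
  case (Suc f)
  define a where "a = prev - l"
  define N where "N = pcount a (n - k - j) (int m - int (S + a))"
  define c0 where "c0 = cop q l prev + cop q S a + cop q (S + a) m + dlen q N + cop q h N"
  have dN: "dlen q N \<le> W" unfolding N_def a_def using prev by (intro pc) auto
  have dl: "dlen q l \<le> W" using Suc.prems S by (intro sm) auto
  have ak: "a \<le> k" unfolding a_def using prev by simp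
  have c1: "cop q l prev \<le> W" using cop_le[OF dl sm[of prev]] prev S by simp
  have c2: "cop q S a \<le> W" using cop_le[OF sm[of S] sm[of a]] ak S by simp
  have c3: "cop q (S + a) m \<le> W" using cop_le[OF sm[of "S+a"] sm[of m]] ak S m by simp
  have c0: "c0 \<le> 5 * W" unfolding c0_def
    using c1 c2 c3 cop_le[OF Suc.prems(2) dN] dN by simp
  have dl1: "cop q l 1 \<le> W" using cop_le[OF dl sm[of 1]] by simp
  have dhN: "cop q h N \<le> W" using cop_le[OF Suc.prems(2) dN] .
  show ?case
  proof (cases "N \<le> h")
    case True
    have dh': "dlen q (h - N) \<le> W" using dlen_mono[OF q, of "h-N" h] Suc.prems(2) by simp
    obtain l' h' c where rec: "algB_inner q n k m j S prev (h - N) (Suc l) f = (l', h', c)"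
      by (metis prod_cases3)
    have "l' \<le> Suc l + f \<and> h' \<le> h - N \<and> c \<le> 7*W*f"
      using Suc.IH[of "Suc l" "h - N"] Suc.prems dh' rec by simp
    then show ?thesis using True rec c0 dl1 dhN
      unfolding algB_inner.simps Let_def a_def[symmetric] N_def[symmetric] c0_def[symmetric]
      by auto
  next
    case False
    then show ?thesis using c0
      unfolding algB_inner.simps Let_def a_def[symmetric] N_def[symmetric] c0_def[symmetric]
      by simp
  qed
qed



lemma outer:
  assumes q: "2 \<le> q" and k1: "1 \<le> k" and kn: "k < n"
    and sm: "\<And>x. x \<le> 2*(k*(n-k))+1 \<Longrightarrow> dlen q x \<le> W"
    and pc: "\<And>a eta s. a \<le> k \<Longrightarrow> eta \<le> n-k \<Longrightarrow> dlen q (pcount a eta s) \<le> W"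
    and m: "m \<le> k*(n-k)"
  shows "S + r*k \<le> k*(n-k) \<Longrightarrow> prev \<le> k \<Longrightarrow> j + r \<le> n-k+1 \<Longrightarrow> dlen q h \<le> W \<Longrightarrow>
    snd (algB_outer q n k m j r S prev h Fs) \<le> r * (5*W + 7*W*(k+1))"
proof (induction r arbitrary: j S prev h Fs)
  case 0 thus ?case by simp
next
  case (Suc r)
  have T1: "n - k \<le> k*(n-k)" using k1 by simp
  have dj: "cop q j 1 \<le> W" using cop_le[OF sm[of j] sm[of 1]] Suc.prems T1 by simp
  have dSm: "cop q S m \<le> W" using cop_le[OF sm[of S] sm[of m]] Suc.prems m by simp
  show ?case
  proof (cases "S = m")
    case True
    obtain Fs' c where rec: "algB_outer q n k m (Suc j) r S 0 h (Fs @ [0]) = (Fs', c)"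
      by (metis prod.exhaust)
    have "c \<le> r * (5*W + 7*W*(k+1))"
      using Suc.IH[of S 0 "Suc j" h "Fs @ [0]"] Suc.prems rec by simp
    thus ?thesis using True rec dj dSm by (simp add: Let_def)
  next
    case False
    obtain l h' c1 where inr: "algB_inner q n k m j S prev h 0 (Suc prev) = (l, h', c1)"
      by (metis prod_cases3)
    have "case algB_inner q n k m j S prev h 0 (Suc prev) of (l', h'', c) \<Rightarrow> l' \<le> 0 + Suc prev \<and> h'' \<le> h \<and> c \<le> 7*W*Suc prev"
      by (rule inner[OF q sm pc]) (use Suc.prems m in auto)
    hence "l \<le> 0 + Suc prev \<and> h' \<le> h \<and> c1 \<le> 7*W*Suc prev"
      by (simp only: inr prod.case)
    moreover have "7*W*Suc prev \<le> 7*W*(k+1)" using Suc.prems(2) by (intro mult_le_mono2) simp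
    ultimately have l: "l \<le> Suc prev" and h': "h' \<le> h" and c1: "c1 \<le> 7*W*(k+1)"
      by linarith+
    define Fj where "Fj = prev - l"
    have Fj: "Fj \<le> k" using Suc.prems(2) unfolding Fj_def by simp
    obtain Fs' c where rec: "algB_outer q n k m (Suc j) r (S + Fj) Fj h' (Fs @ [Fj]) = (Fs', c)"
      by (metis prod.exhaust)
    have dh': "dlen q h' \<le> W" using dlen_mono[OF q h'] Suc.prems(4) by simp
    have "c \<le> r * (5*W + 7*W*(k+1))"
      using Suc.IH[of "S + Fj" Fj "Suc j" h' "Fs @ [Fj]"] Suc.prems rec Fj dh' by simp
    moreover have "cop q prev l \<le> W" using cop_le[OF sm[of prev] sm[of l]] Suc.prems l by simp
    moreover have "cop q S Fj \<le> W" using cop_le[OF sm[of S] sm[of Fj]] Suc.prems Fj by simp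
    ultimately show ?thesis using False rec inr dj dSm c1
      by (simp add: Let_def Fj_def[symmetric])
  qed
qed



lemma algB_cost:
  assumes q: "2 \<le> q" and k1: "1 \<le> k" and kn: "k < n"
    and sm: "\<And>x. x \<le> 2*(k*(n-k))+1 \<Longrightarrow> dlen q x \<le> W"
    and pc: "\<And>a eta s. a \<le> k \<Longrightarrow> eta \<le> n-k \<Longrightarrow> dlen q (pcount a eta s) \<le> W"
    and m: "m \<le> k*(n-k)" and h: "dlen q h \<le> W"
  shows "snd (algB q n k m h) \<le> (n-k) * (5*W + 7*W*(k+1))"
  unfolding algB_def
  by (rule outer[OF q k1 kn sm pc m]) (use h in \<open>auto simp: mult.commute\<close>)

lemma loopC:
  assumes q: "2 \<le> q" and k1: "1 \<le> k" and kn: "k < n"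
    and sm: "\<And>x. x \<le> 2*(k*(n-k))+1 \<Longrightarrow> dlen q x \<le> W"
    and pc: "\<And>a eta s. a \<le> k \<Longrightarrow> eta \<le> n-k \<Longrightarrow> dlen q (pcount a eta s) \<le> W"
    and dA: "\<And>m. m \<le> k*(n-k) \<Longrightarrow> dlen q (pcount k (n-k) (int m) * q^m) \<le> W"
  shows "j + f \<le> k*(n-k)+1 \<Longrightarrow> dlen q i \<le> W \<Longrightarrow>
    snd (snd (snd (algC_loop q n k i j f))) \<le> f*(5*W) + k*(n-k) + (n-k) * (5*W + 7*W*(k+1))"
proof (induction f arbitrary: i j)
  case 0 thus ?case by simp
next
  case (Suc f)
  define T where "T = k*(n-k)"
  define m where "m = T - j"
  define A where "A = pcount k (n - k) (int m) * q ^ m"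
  define c0 where "c0 = cop q T j + dlen q A + cop q i A"
  have dAm: "dlen q A \<le> W" unfolding A_def m_def T_def by (intro dA) simp
  have dT: "cop q T j \<le> W" using cop_le[OF sm[of T] sm[of j]] Suc.prems unfolding T_def by simp
  have diA: "cop q i A \<le> W" using cop_le[OF Suc.prems(2) dAm] .
  have c0: "c0 \<le> 3*W" unfolding c0_def using dT dAm diA by simp
  have dj: "cop q j 1 \<le> W" using cop_le[OF sm[of j] sm[of 1]] Suc.prems by simp
  show ?case
  proof (cases "i < A")
    case True
    have mT: "m \<le> k*(n-k)" unfolding m_def T_def by simp
    define h where "h = i div q ^ m"
    have dh: "dlen q h \<le> W" using dlen_mono[OF q, of h i] Suc.prems(2) unfolding h_def by simp
    have cB: "snd (algB q n k m h) \<le> (n-k) * (5*W + 7*W*(k+1))"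
      using algB_cost[OF q k1 kn sm pc mT dh] .
    obtain Fs cB' where B: "algB q n k m h = (Fs, cB')" by (metis prod.exhaust)
    have "m \<le> T" unfolding m_def by simp
    then show ?thesis using True c0 cB B Suc.prems(2)
      unfolding algC_loop.simps Let_def T_def[symmetric] m_def[symmetric] A_def[symmetric] c0_def[symmetric] h_def[symmetric]
      by (simp add: split_beta)
  next
    case False
    have di: "dlen q (i - A) \<le> W" using dlen_mono[OF q, of "i - A" i] Suc.prems(2) by simp
    obtain Fs m' x c where rec: "algC_loop q n k (i - A) (Suc j) f = (Fs, m', x, c)"
      by (metis prod_cases4)
    have "c \<le> f*(5*W) + k*(n-k) + (n-k) * (5*W + 7*W*(k+1))"
      using Suc.IH[of "Suc j" "i - A"] Suc.prems di rec by simp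
    then show ?thesis using False c0 diA dj rec
      unfolding algC_loop.simps Let_def T_def[symmetric] m_def[symmetric] A_def[symmetric] c0_def[symmetric]
      by simp
  qed
qed



lemma qbinom_le:
  assumes q: "2 \<le> q" and kn: "k \<le> n"
  shows "qbinom q n k \<le> real q ^ (k * (n - k + 1))"
proof -
  have "qbinom q n k \<le> (\<Prod>i<k. real q ^ (n - k + 1))"
    unfolding qbinom_def
  proof (rule prod_mono, rule conjI)
    fix i assume i: "i \<in> {..<k}"
    define a where "a = k - i"
    have a1: "1 \<le> a" using i unfolding a_def by simp
    have ni: "n - i = (n - k) + a" using i kn unfolding a_def by simp
    define y where "y = real q ^ a"
    have y2: "2 \<le> y" unfolding y_def
    proof -
      have "real q ^ 1 \<le> real q ^ a" using a1 q by (intro power_increasing) auto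
      moreover have "(2::real) \<le> real q" using q by simp
      ultimately show "2 \<le> real q ^ a" by (metis order_trans power_one_right)
    qed
    have qE: "1 \<le> real q ^ (n-k)" using q by (simp add: one_le_power)
    have eq: "real q ^ (n - i) = real q ^ (n-k) * y" unfolding ni y_def by (simp add: power_add)
    have ka: "real q ^ (k - i) = y" unfolding y_def a_def ..
    show "0 \<le> (real q ^ (n - i) - 1) / (real q ^ (k - i) - 1)"
    proof -
      have "1 * y \<le> real q ^ (n-k) * y" using y2 by (intro mult_right_mono[OF qE]) auto
      hence h: "y \<le> real q ^ (n-k) * y" by simp
      show ?thesis unfolding eq ka using y2 h by (intro divide_nonneg_nonneg) linarith+
    qed
    have "real q ^ (n-k) * y - 1 \<le> real q ^ (n-k+1) * (y - 1)"
    proof -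
      have "2 * (y - 1) \<le> real q * (y - 1)" using y2 q by (intro mult_right_mono) auto
      hence "y \<le> real q * (y - 1)" using y2 by (smt (verit))
      hence "real q ^ (n-k) * y \<le> real q ^ (n-k) * (real q * (y - 1))"
        using qE by (intro mult_left_mono) auto
      thus ?thesis by (simp add: algebra_simps)
    qed
    thus "(real q ^ (n - i) - 1) / (real q ^ (k - i) - 1) \<le> real q ^ (n - k + 1)"
      unfolding eq ka using y2 by (simp add: divide_le_eq)
  qed
  also have "\<dots> = (real q ^ (n - k + 1)) ^ k" by simp
  also have "\<dots> = real q ^ (k * (n - k + 1))" by (metis power_mult mult.commute)
  finally show ?thesis .
qed

lemma powr52: "0 \<le> (x::real) \<Longrightarrow> x powr (5/2) = x^2 * sqrt x"
proof -
  assume x: "0 \<le> x"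
  show ?thesis
  proof (cases "x = 0")
    case True thus ?thesis by simp
  next
    case False
    have "x powr (5/2) = x powr (2 + 1/2)" by simp
    also have "\<dots> = x powr 2 * x powr (1/2)" by (rule powr_add)
    finally have "x powr (5/2) = x powr 2 * x powr (1/2)" .
    thus ?thesis using x False by (simp add: powr_half_sqrt)
  qed
qed



lemma arith1:
  fixes k E T D :: nat
  assumes "T = k*E" "1 \<le> k" "1 \<le> E"
  shows "(k+1)*(E+1)*(T+1)*D \<le> 8*(T*T)*D"
proof -
  have "(k+1)*(E+1) \<le> (2*k)*(2*E)" using assms by (intro mult_le_mono) auto
  also have "\<dots> = 4*T" using assms by simp
  finally have a: "(k+1)*(E+1) \<le> 4*T" .
  have b: "T+1 \<le> 2*T" using assms by simp
  have "(k+1)*(E+1)*(T+1) \<le> (4*T)*(2*T)" using a b by (rule mult_le_mono)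
  hence "(k+1)*(E+1)*(T+1)*D \<le> (4*T)*(2*T)*D" by (rule mult_le_mono1)
  thus ?thesis by (simp add: algebra_simps)
qed

lemma arith2:
  fixes k E T :: nat
  assumes "T = k*E" "1 \<le> k" "1 \<le> E"
  shows "(T+1)*(5*(10*T)) + T + E*(5*(10*T) + 7*(10*T)*(k+1)) \<le> 291*(T*T)"
proof -
  have ET: "E \<le> T" using assms by simp
  have T1: "1 \<le> T" using assms by simp
  have "E*(5*(10*T) + 7*(10*T)*(k+1)) = 120*(T*E) + 70*T*(k*E)" by (simp add: algebra_simps)
  also have "\<dots> \<le> 120*(T*T) + 70*T*T" using ET assms(1) by (intro add_mono) auto
  finally have e: "E*(5*(10*T) + 7*(10*T)*(k+1)) \<le> 190*(T*T)" by simp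
  have "(T+1)*(5*(10*T)) \<le> (2*T)*(5*(10*T))" using T1 by (intro mult_le_mono1) simp
  hence a: "(T+1)*(5*(10*T)) \<le> 100*(T*T)" by simp
  have b: "T \<le> T*T" using T1 by simp
  show ?thesis using a b e by linarith
qed

theorem theorem10:
  fixes q :: nat
  assumes "prime_power q"
  shows "\<exists>C::real. \<forall>n k i::nat. 0 < k \<and> k < n \<and> real i < qbinom q n k \<longrightarrow>
           real (encode_cost q n k i) \<le> C * real k powr (5/2) * real (n - k) powr (5/2)"
proof -
  obtain p r where pr: "prime p" "r > 0" "q = p ^ r" using assms unfolding prime_power_def by blast
  have q: "2 \<le> q"
  proof -
    have "p \<le> p ^ r" using pr prime_gt_0_nat[of p] by (simp add: self_le_power)
    thus ?thesis using prime_ge_2_nat[OF pr(1)] pr(3) by simp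
  qed
  show ?thesis
  proof (intro exI[of _ 400] allI impI)
    fix n k i :: nat
    assume H: "0 < k \<and> k < n \<and> real i < qbinom q n k"
    have k1: "1 \<le> k" and kn: "k < n" and iq: "real i < qbinom q n k" using H by auto
    define T where "T = k*(n-k)"
    have E1: "1 \<le> n - k" using kn by simp
    have T1: "1 \<le> T" unfolding T_def using k1 E1 by simp
    have kT: "k \<le> T" unfolding T_def using E1 by simp
    have ET: "n - k \<le> T" unfolding T_def using k1 by simp
    have sT: "real T = real k * real (n-k)" unfolding T_def by simp
    have sq1: "1 \<le> sqrt (real T)" using T1 by simp
    have sqT: "sqrt (real T) \<le> real T"
    proof -
      have "sqrt (real T) * 1 \<le> sqrt (real T) * sqrt (real T)" using sq1 by (intro mult_left_mono) auto
      thus ?thesis by simp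
    qed
    define D where "D = DD k (n-k)"
    have Dr: "real D \<le> 6 * sqrt (real T) + 3" unfolding D_def sT by (rule DD_bound)
    have D9: "real D \<le> 9 * sqrt (real T)" using Dr sq1 by linarith
    have "real D \<le> real (9*T)" using D9 sqT by simp
    hence DT: "D \<le> 9*T" by (simp only: of_nat_le_iff)
    have D1: "1 \<le> D" unfolding D_def DD_def by simp
    have pcq: "\<And>a eta s. a \<le> k \<Longrightarrow> eta \<le> n-k \<Longrightarrow> pcount a eta s < q ^ D"
      unfolding D_def using pcount_lt[OF q k1 E1] by blast
    have pcd: "\<And>a eta s. a \<le> k \<Longrightarrow> eta \<le> n-k \<Longrightarrow> dlen q (pcount a eta s) \<le> D"
    proof -
      fix a eta s assume "a \<le> k" "eta \<le> n-k"
      hence "dlen q (pcount a eta s) \<le> max 1 D" by (intro dlen_le pcq)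
      thus "dlen q (pcount a eta s) \<le> D" using D1 by simp
    qed
    define W where "W = 10*T"
    have sm: "\<And>x. x \<le> 2*(k*(n-k))+1 \<Longrightarrow> dlen q x \<le> W"
    proof -
      fix x assume "x \<le> 2*(k*(n-k))+1"
      thus "dlen q x \<le> W" using dlen_lin[OF q, of x] T1 unfolding W_def T_def by linarith
    qed
    have pc: "\<And>a eta s. a \<le> k \<Longrightarrow> eta \<le> n-k \<Longrightarrow> dlen q (pcount a eta s) \<le> W"
    proof -
      fix a eta s assume "a \<le> k" "eta \<le> n-k"
      thus "dlen q (pcount a eta s) \<le> W" using pcd[of a eta s] DT unfolding W_def by linarith
    qed
    have dA: "\<And>m. m \<le> k*(n-k) \<Longrightarrow> dlen q (pcount k (n-k) (int m) * q^m) \<le> W"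
    proof -
      fix m assume m: "m \<le> k*(n-k)"
      have "pcount k (n-k) (int m) * q^m < q^D * q^m"
        using pcq[of k "n-k" "int m"] q by (intro mult_strict_right_mono) auto
      hence "pcount k (n-k) (int m) * q^m < q^(D+m)" by (simp add: power_add)
      hence "dlen q (pcount k (n-k) (int m) * q^m) \<le> max 1 (D+m)" by (rule dlen_le)
      thus "dlen q (pcount k (n-k) (int m) * q^m) \<le> W" using DT m D1 unfolding W_def T_def by simp
    qed
    have "real i < real q ^ (k * (n - k + 1))" using less_le_trans[OF iq qbinom_le[OF q less_imp_le[OF kn]]] .
    hence "i < q ^ (k * (n - k + 1))" by (metis of_nat_less_iff of_nat_power)
    also have "\<dots> \<le> q ^ (2*T)" using q kT unfolding T_def by (intro power_increasing) (auto simp: algebra_simps)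
    finally have "dlen q i \<le> max 1 (2*T)" by (rule dlen_le)
    hence di: "dlen q i \<le> W" using T1 unfolding W_def by simp
    have loop: "snd (snd (snd (algC_loop q n k i 0 (k*(n-k)+1)))) \<le>
        (k*(n-k)+1)*(5*W) + k*(n-k) + (n-k) * (5*W + 7*W*(k+1))"
      by (rule loopC[OF q k1 kn sm pc dA]) (use di in auto)
    have tab: "table_cost q n k \<le> (k+1)*(n-k+1)*(T+1)*D"
    proof -
      have "table_cost q n k \<le> (\<Sum>a\<le>k. \<Sum>eta\<le>n - k. \<Sum>s\<le>k * (n - k). D)"
        unfolding table_cost_def by (intro sum_mono pcd) auto
      also have "(\<Sum>a\<le>k. \<Sum>eta\<le>n - k. \<Sum>s\<le>k * (n - k). D) = (k+1)*((n-k+1)*((T+1)*D))"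
        unfolding T_def by (simp only: sum_constant card_atMost of_nat_id) simp
      finally show ?thesis by (simp only: mult.assoc)
    qed
    have tot: "encode_cost q n k i \<le> 8*(T*T)*D + 291*(T*T)"
    proof -
      have "encode_cost q n k i \<le> (k+1)*(n-k+1)*(T+1)*D + ((T+1)*(5*(10*T)) + T + (n-k)*(5*(10*T) + 7*(10*T)*(k+1)))"
      proof -
        have loop': "snd (snd (snd (algC_loop q n k i 0 (k*(n-k)+1)))) \<le> (T+1)*(5*(10*T)) + T + (n-k)*(5*(10*T) + 7*(10*T)*(k+1))"
          using loop unfolding W_def T_def .
        show ?thesis unfolding encode_cost_def by (rule add_mono[OF tab loop'])
      qed
      also have "\<dots> \<le> 8*(T*T)*D + 291*(T*T)"
        by (intro add_mono arith1[OF T_def k1 E1] arith2[OF T_def k1 E1])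
      finally show ?thesis .
    qed
    have "real (encode_cost q n k i) \<le> real (8*(T*T)*D + 291*(T*T))"
      using tot by (simp only: of_nat_le_iff)
    also have "\<dots> = 8*(real T*real T)*real D + 291*(real T*real T)" by simp
    also have "\<dots> \<le> 8*(real T*real T)*(9 * sqrt (real T)) + 291*(real T*real T)*sqrt (real T)"
    proof (rule add_mono)
      show "8*(real T*real T)*real D \<le> 8*(real T*real T)*(9 * sqrt (real T))"
        by (rule mult_left_mono[OF D9]) simp
      show "291*(real T*real T) \<le> 291*(real T*real T)*sqrt (real T)"
        using mult_left_mono[OF sq1, of "291*(real T*real T)"] by simp
    qed
    also have "\<dots> = 363 * (real T^2 * sqrt (real T))"
      by (simp add: power2_eq_square)
    also have "\<dots> \<le> 400 * (real T^2 * sqrt (real T))"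
      by (intro mult_right_mono) auto
    also have "real T^2 * sqrt (real T) = real k powr (5/2) * real (n - k) powr (5/2)"
      unfolding powr52[OF of_nat_0_le_iff] powr52[OF of_nat_0_le_iff] sT
      by (simp add: power_mult_distrib real_sqrt_mult)
    finally show "real (encode_cost q n k i) \<le> 400 * real k powr (5/2) * real (n - k) powr (5/2)"
      by (simp add: mult.assoc)
  qed
qed

end
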